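(* Consider the selection task with rank queries. For every $n\ge1$, $k\ge1$ and $p\in[0,1]$, there is a deterministic algorithm that runs in $k$ rounds on a uniformly random input of length $n$, succeeds with probability at least $p$, and issues at most $np\bigl(1-\frac{k-1}{2k}p\bigr)+1$ queries in expectation.
   Context: Selection with rank queries: there is a vector $\vec{x}=(x_1,\ldots,x_n)$ whose ranks form an unknown permutation of $\{1,\ldots,n\}$; a rank $r\in\{1,\ldots,n\}$ is given and the goal is to output the index $i$ with $\mathrm{rank}(x_i)=r$. Queries have the form "How is $\mathrm{rank}(x_j)$ compared to $m$?", with answer "$<$", "$=$" or "$>$". An algorithm runs in $k$ rounds if in each of $k$ rounds it submits a set of queries chosen depending only on answers of earlier rounds, then receives all answers. "Uniformly random input" means the rank permutation is uniformly random; probabilities and expectations are over it. *)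

theory Defs
  imports Complex_Main "HOL-Combinatorics.Permutations"
begin

text \<open>Answer to a rank query "How is rank(x_j) compared to m?".\<close>
datatype ans = Lt | Eq | Gt

text \<open>The hidden input is a rank permutation \<sigma> of {1..n}: rank(x_i) = \<sigma> i.
  A query is a pair (j, m).\<close>
definition answer :: "(nat \<Rightarrow> nat) \<Rightarrow> nat \<times> nat \<Rightarrow> ans" where
  "answer \<sigma> q = (if \<sigma> (fst q) < snd q then Lt else if \<sigma> (fst q) = snd q then Eq else Gt)"

type_synonym history = "nat \<times> nat \<Rightarrow> ans option"

text \<open>A deterministic round-based algorithm is given by a query strategy
  Q t h (the set of queries submitted in round t, depending only on the answers h
  received in earlier rounds) and an output function applied to all answers received.
  hist Q \<sigma> t is the record of all answers after t rounds.\<close>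
fun hist :: "(nat \<Rightarrow> history \<Rightarrow> (nat \<times> nat) set) \<Rightarrow> (nat \<Rightarrow> nat) \<Rightarrow> nat \<Rightarrow> history" where
  "hist Q \<sigma> 0 = Map.empty"
| "hist Q \<sigma> (Suc t) =
     hist Q \<sigma> t ++ (\<lambda>q. if q \<in> Q t (hist Q \<sigma> t) then Some (answer \<sigma> q) else None)"

definition num_queries :: "(nat \<Rightarrow> history \<Rightarrow> (nat \<times> nat) set) \<Rightarrow> nat \<Rightarrow> (nat \<Rightarrow> nat) \<Rightarrow> nat" where
  "num_queries Q k \<sigma> = (\<Sum>t<k. card (Q t (hist Q \<sigma> t)))"

definition succeeds ::
  "nat \<Rightarrow> nat \<Rightarrow> nat \<Rightarrow> (nat \<Rightarrow> history \<Rightarrow> (nat \<times> nat) set) \<Rightarrow> (history \<Rightarrow> nat) \<Rightarrow> (nat \<Rightarrow> nat) \<Rightarrow> bool" where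
  "succeeds n r k Q out \<sigma> = (let i = out (hist Q \<sigma> k) in i \<in> {1..n} \<and> \<sigma> i = r)"

text \<open>Uniformly random input: all permutations of {1..n} are equally likely.\<close>
definition perms :: "nat \<Rightarrow> (nat \<Rightarrow> nat) set" where
  "perms n = {\<sigma>. \<sigma> permutes {1..n}}"

definition success_prob ::
  "nat \<Rightarrow> nat \<Rightarrow> nat \<Rightarrow> (nat \<Rightarrow> history \<Rightarrow> (nat \<times> nat) set) \<Rightarrow> (history \<Rightarrow> nat) \<Rightarrow> real" where
  "success_prob n r k Q out =
     real (card {\<sigma> \<in> perms n. succeeds n r k Q out \<sigma>}) / real (card (perms n))"

definition expected_queries :: "nat \<Rightarrow> nat \<Rightarrow> (nat \<Rightarrow> history \<Rightarrow> (nat \<times> nat) set) \<Rightarrow> real" where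
  "expected_queries n k Q = (\<Sum>\<sigma>\<in>perms n. real (num_queries Q k \<sigma>)) / real (card (perms n))"

end

theory Submission imports Defs begin

lemma fiber_card_eq:
  assumes "j \<in> {1..n}" "j' \<in> {1..n}"
  shows "card {\<sigma> \<in> perms n. \<sigma> j = r} = card {\<sigma> \<in> perms n. \<sigma> j' = r}"
proof -
  let ?phi = "\<lambda>\<sigma>. \<sigma> \<circ> transpose j j'"
  let ?psi = "\<lambda>\<sigma>. \<sigma> \<circ> transpose j' j"
  have "bij_betw ?phi {\<sigma> \<in> perms n. \<sigma> j = r} {\<sigma> \<in> perms n. \<sigma> j' = r}"
  proof (rule bij_betw_byWitness[where f' = ?psi])
    show "\<forall>a\<in>{\<sigma> \<in> perms n. \<sigma> j = r}. ?psi (?phi a) = a"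
      by (auto simp: fun_eq_iff transpose_def)
    show "\<forall>a\<in>{\<sigma> \<in> perms n. \<sigma> j' = r}. ?phi (?psi a) = a"
      by (auto simp: fun_eq_iff transpose_def)
    show "?phi ` {\<sigma> \<in> perms n. \<sigma> j = r} \<subseteq> {\<sigma> \<in> perms n. \<sigma> j' = r}"
      using assms by (auto simp: perms_def intro!: permutes_compose permutes_swap_id)
    show "?psi ` {\<sigma> \<in> perms n. \<sigma> j' = r} \<subseteq> {\<sigma> \<in> perms n. \<sigma> j = r}"
      using assms by (auto simp: perms_def intro!: permutes_compose permutes_swap_id)
  qed
  then show ?thesis by (rule bij_betw_same_card)
qed

lemma finite_perms: "finite (perms n)"
  unfolding perms_def by (rule finite_permutations) simp

lemma sum_perms:
  assumes r: "r \<in> {1..n}"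
  shows "(\<Sum>\<sigma>\<in>perms n. f (inv \<sigma> r)) = real (card {\<sigma> \<in> perms n. \<sigma> 1 = r}) * (\<Sum>j\<in>{1..n}. f j)"
proof -
  have img: "(\<lambda>\<sigma>. inv \<sigma> r) ` perms n \<subseteq> {1..n}"
  proof
    fix j assume "j \<in> (\<lambda>\<sigma>. inv \<sigma> r) ` perms n"
    then obtain \<sigma> where s: "\<sigma> permutes {1..n}" and j: "j = inv \<sigma> r" by (auto simp: perms_def)
    have "inv \<sigma> permutes {1..n}" using s by (rule permutes_inv)
    then have "inv \<sigma> r \<in> {1..n} \<longleftrightarrow> r \<in> {1..n}" by (rule permutes_in_image)
    then show "j \<in> {1..n}" using r j by blast
  qed
  have "(\<Sum>\<sigma>\<in>perms n. f (inv \<sigma> r)) = (\<Sum>j\<in>{1..n}. \<Sum>\<sigma>\<in>{\<sigma>\<in>perms n. inv \<sigma> r = j}. f (inv \<sigma> r))"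
    by (rule sum.group[symmetric, OF finite_perms _ img]) simp
  also have "\<dots> = (\<Sum>j\<in>{1..n}. real (card {\<sigma> \<in> perms n. \<sigma> 1 = r}) * f j)"
  proof (rule sum.cong[OF refl])
    fix j assume j: "j \<in> {1..n}"
    have e: "{\<sigma>\<in>perms n. inv \<sigma> r = j} = {\<sigma>\<in>perms n. \<sigma> j = r}"
      by (auto simp: perms_def permutes_inverses)
    have "(\<Sum>\<sigma>\<in>{\<sigma>\<in>perms n. inv \<sigma> r = j}. f (inv \<sigma> r)) = (\<Sum>\<sigma>\<in>{\<sigma>\<in>perms n. inv \<sigma> r = j}. f j)"
      by (rule sum.cong) auto
    also have "\<dots> = real (card {\<sigma>\<in>perms n. \<sigma> j = r}) * f j" using e by simp
    also have "card {\<sigma>\<in>perms n. \<sigma> j = r} = card {\<sigma> \<in> perms n. \<sigma> 1 = r}"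
      using j r by (intro fiber_card_eq) auto
    finally show "(\<Sum>\<sigma>\<in>{\<sigma>\<in>perms n. inv \<sigma> r = j}. f (inv \<sigma> r)) = real (card {\<sigma> \<in> perms n. \<sigma> 1 = r}) * f j" .
  qed
  also have "\<dots> = real (card {\<sigma> \<in> perms n. \<sigma> 1 = r}) * (\<Sum>j\<in>{1..n}. f j)"
    by (simp add: sum_distrib_left)
  finally show ?thesis .
qed

definition QQ :: "(nat \<Rightarrow> nat) \<Rightarrow> nat \<Rightarrow> nat \<Rightarrow> history \<Rightarrow> (nat \<times> nat) set" where
  "QQ a r t h = (if \<exists>q. h q = Some Eq then {} else (\<lambda>j. (j, r)) ` {Suc (a t)..a (Suc t)})"

lemma hist_inv:
  assumes a: "mono a" "a 0 = 0" and s: "\<sigma> permutes {1..n}" and pos: "\<sigma> pos = r" "pos \<in> {1..n}"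
  shows "(\<forall>q v. hist (QQ a r) \<sigma> t q = Some v \<longrightarrow> v = answer \<sigma> q \<and> (\<exists>j. q = (j, r) \<and> 1 \<le> j \<and> j \<le> a t))
     \<and> (pos \<le> a t \<longrightarrow> hist (QQ a r) \<sigma> t (pos, r) = Some Eq)"
proof (induction t)
  case 0
  then show ?case using a pos by auto
next
  case (Suc t)
  have mono: "a t \<le> a (Suc t)" using a(1) by (simp add: monoD)
  show ?case
  proof (cases "\<exists>q. hist (QQ a r) \<sigma> t q = Some Eq")
    case True
    then obtain q where q: "hist (QQ a r) \<sigma> t q = Some Eq" by blast
    from q Suc.IH obtain j where j: "q = (j, r)" "1 \<le> j" "j \<le> a t" "answer \<sigma> q = Eq" by fastforce
    then have "\<sigma> j = r" by (simp add: answer_def split: if_splits)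
    have "j = pos" using \<open>\<sigma> j = r\<close> pos(1) permutes_inj[OF s] by (metis injD)
    have h: "hist (QQ a r) \<sigma> (Suc t) = hist (QQ a r) \<sigma> t"
      using True by (simp add: QQ_def)
    show ?thesis unfolding h using Suc.IH mono \<open>j = pos\<close> j(3) by fastforce
  next
    case False
    have h: "hist (QQ a r) \<sigma> (Suc t) q = (if q \<in> (\<lambda>j. (j, r)) ` {Suc (a t)..a (Suc t)} then Some (answer \<sigma> q) else hist (QQ a r) \<sigma> t q)" for q
      using False by (simp add: QQ_def map_add_def split: option.split)
    show ?thesis
    proof (rule conjI)
      show "\<forall>q v. hist (QQ a r) \<sigma> (Suc t) q = Some v \<longrightarrow> v = answer \<sigma> q \<and> (\<exists>j. q = (j, r) \<and> 1 \<le> j \<and> j \<le> a (Suc t))"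
      proof (intro allI impI)
      fix q v assume "hist (QQ a r) \<sigma> (Suc t) q = Some v"
      then show "v = answer \<sigma> q \<and> (\<exists>j. q = (j, r) \<and> 1 \<le> j \<and> j \<le> a (Suc t))"
      proof (cases "q \<in> (\<lambda>j. (j, r)) ` {Suc (a t)..a (Suc t)}")
        case True
        then show ?thesis using \<open>hist (QQ a r) \<sigma> (Suc t) q = Some v\<close> unfolding h by auto
      next
        case F: False
        then have "hist (QQ a r) \<sigma> t q = Some v" using \<open>hist (QQ a r) \<sigma> (Suc t) q = Some v\<close> unfolding h by simp
        then have "v = answer \<sigma> q \<and> (\<exists>j. q = (j, r) \<and> 1 \<le> j \<and> j \<le> a t)" using Suc.IH by blast
        then show ?thesis using mono by (metis le_trans)
      qed
      qed
    next
      show "pos \<le> a (Suc t) \<longrightarrow> hist (QQ a r) \<sigma> (Suc t) (pos, r) = Some Eq"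
      proof
      assume "pos \<le> a (Suc t)"
      show "hist (QQ a r) \<sigma> (Suc t) (pos, r) = Some Eq"
      proof (cases "pos \<le> a t")
        case True
        then show ?thesis using Suc.IH False by blast
      next
        case F: False
        then show ?thesis unfolding h using \<open>pos \<le> a (Suc t)\<close> pos by (auto simp: answer_def)
      qed
      qed
    qed
  qed
qed


definition outp :: "nat \<Rightarrow> nat \<Rightarrow> history \<Rightarrow> nat" where
  "outp n r h = (SOME j. j \<in> {1..n} \<and> h (j, r) = Some Eq)"

lemma pos_facts:
  assumes "\<sigma> \<in> perms n" "r \<in> {1..n}"
  shows "\<sigma> permutes {1..n}" "\<sigma> (inv \<sigma> r) = r" "inv \<sigma> r \<in> {1..n}"
proof -
  show s: "\<sigma> permutes {1..n}" using assms by (simp add: perms_def)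
  show "\<sigma> (inv \<sigma> r) = r" using s by (simp add: permutes_inverses)
  have "inv \<sigma> permutes {1..n}" using s by (rule permutes_inv)
  then have "inv \<sigma> r \<in> {1..n} \<longleftrightarrow> r \<in> {1..n}" by (rule permutes_in_image)
  then show "inv \<sigma> r \<in> {1..n}" using assms by blast
qed

lemma eq_iff:
  assumes a: "mono a" "a 0 = 0" and s: "\<sigma> \<in> perms n" "r \<in> {1..n}"
  shows "(\<exists>q. hist (QQ a r) \<sigma> t q = Some Eq) \<longleftrightarrow> inv \<sigma> r \<le> a t"
proof
  note P = pos_facts[OF s]
  note H = hist_inv[OF a P(1) P(2) P(3), of t]
  {
    assume "\<exists>q. hist (QQ a r) \<sigma> t q = Some Eq"
    then obtain q where q: "hist (QQ a r) \<sigma> t q = Some Eq" by blast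
    from q H obtain j where j: "q = (j, r)" "j \<le> a t" "answer \<sigma> q = Eq" by fastforce
    then have "\<sigma> j = r" by (simp add: answer_def split: if_splits)
    have "j = inv \<sigma> r" using \<open>\<sigma> j = r\<close> P(2) permutes_inj[OF P(1)] by (metis injD)
    then show "inv \<sigma> r \<le> a t" using j by simp
  }
  assume "inv \<sigma> r \<le> a t"
  then show "\<exists>q. hist (QQ a r) \<sigma> t q = Some Eq" using H by blast
qed

lemma card_QQ:
  assumes a: "mono a" "a 0 = 0" and s: "\<sigma> \<in> perms n" "r \<in> {1..n}"
  shows "card (QQ a r t (hist (QQ a r) \<sigma> t)) = (if inv \<sigma> r \<le> a t then 0 else a (Suc t) - a t)"
proof -
  have "card ((\<lambda>j. (j, r)) ` {Suc (a t)..a (Suc t)}) = a (Suc t) - a t"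
    by (subst card_image) (auto simp: inj_on_def)
  then show ?thesis using eq_iff[OF a s, of t] by (simp add: QQ_def)
qed

lemma num_QQ:
  assumes a: "mono a" "a 0 = 0" and s: "\<sigma> \<in> perms n" "r \<in> {1..n}"
  shows "num_queries (QQ a r) k \<sigma> = (\<Sum>t<k. if inv \<sigma> r \<le> a t then 0 else a (Suc t) - a t)"
  unfolding num_queries_def using card_QQ[OF a s] by simp

lemma succ_QQ:
  assumes a: "mono a" "a 0 = 0" and s: "\<sigma> \<in> perms n" "r \<in> {1..n}" and le: "inv \<sigma> r \<le> a k"
  shows "succeeds n r k (QQ a r) (outp n r) \<sigma>"
proof -
  note P = pos_facts[OF s]
  note H = hist_inv[OF a P(1) P(2) P(3), of k]
  let ?h = "hist (QQ a r) \<sigma> k"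
  have ex: "\<exists>j. j \<in> {1..n} \<and> ?h (j, r) = Some Eq" using H le P(3) by blast
  define i where "i = outp n r ?h"
  have i: "i \<in> {1..n} \<and> ?h (i, r) = Some Eq" unfolding i_def outp_def by (rule someI_ex[OF ex])
  then have "answer \<sigma> (i, r) = Eq" using H by fastforce
  then have "\<sigma> i = r" by (simp add: answer_def split: if_splits)
  then show ?thesis using i unfolding succeeds_def i_def Let_def by simp
qed


lemma final_ineq:
  fixes n x m k :: real
  assumes "x \<le> m" "m \<le> x + 1" "m \<le> n" "k \<ge> 1" "0 \<le> x"
  shows "n * m - m^2/2 + (x/k+1)*m/2 \<le> n * x - x^2 * (k-1)/(2*k) + n"
proof -
  define d where "d = m - x"
  have m: "m = x + d" unfolding d_def by simp
  have d0: "0 \<le> d" "d \<le> 1" using assms unfolding d_def by auto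
  have eq: "n * m - m^2/2 + (x/k+1)*m/2 - (n * x - x^2 * (k-1)/(2*k) + n)
      = -((1-d)*(n-x-d)) - (x/2)*(1-d/k) - d*(1-d)/2"
    unfolding m using assms(4) by (simp add: field_simps power2_eq_square)
  have p1: "(1-d)*(n-x-d) \<ge> 0" using d0 assms unfolding d_def by simp
  have "d/k \<le> 1" using d0 assms(4) by simp
  then have p2: "(x/2)*(1-d/k) \<ge> 0" using assms(5) by simp
  have p3: "d*(1-d)/2 \<ge> 0" using d0 by simp
  show ?thesis using eq p1 p2 p3 by linarith
qed

lemma sum_ineq:
  fixes a :: "nat \<Rightarrow> nat" and x :: real and n k :: nat
  assumes mono: "mono a" and a0: "a 0 = 0"
    and lo: "\<And>t. real t * x / real k \<le> real (a t)"
    and hi: "\<And>t. real (a t) \<le> real t * x / real k + 1"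
    and k: "k \<ge> 1" and x: "0 \<le> x" "x \<le> real n" and akn: "a k \<le> n"
  shows "(\<Sum>t<k. real (a (Suc t) - a t) * (real n - real (a t)))
           \<le> real n * x - x^2 * (real k - 1) / (2 * real k) + real n"
proof -
  define H where "H = (\<lambda>y::real. real n * y - y^2/2)"
  define c where "c = x / real k + 1"
  have trm: "real (a (Suc t) - a t) * (real n - real (a t))
      \<le> (H (real (a (Suc t))) - H (real (a t))) + c/2 * (real (a (Suc t)) - real (a t))" for t
  proof -
    have le: "a t \<le> a (Suc t)" using mono by (simp add: monoD)
    define d where "d = real (a (Suc t)) - real (a t)"
    have dd: "real (a (Suc t) - a t) = d" using le unfolding d_def by simp
    have d0: "0 \<le> d" using le unfolding d_def by simp
    have dc: "d \<le> c"
    proof -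
      have "real (a (Suc t)) \<le> real (Suc t) * x / real k + 1" by (rule hi)
      moreover have "real t * x / real k \<le> real (a t)" by (rule lo)
      moreover have "real (Suc t) * x / real k = real t * x / real k + x / real k"
        by (simp add: add_divide_distrib algebra_simps)
      ultimately show ?thesis unfolding d_def c_def by linarith
    qed
    have "d * d \<le> d * c" using d0 dc by (simp add: mult_left_mono)
    moreover have "H (real (a (Suc t))) - H (real (a t)) = d * real n - d * real (a t) - d*d/2"
      unfolding H_def d_def by (simp add: power2_eq_square field_simps)
    ultimately show ?thesis unfolding dd d_def[symmetric] by (simp add: algebra_simps)
  qed
  have "(\<Sum>t<k. real (a (Suc t) - a t) * (real n - real (a t)))
      \<le> (\<Sum>t<k. (H (real (a (Suc t))) - H (real (a t))) + c/2 * (real (a (Suc t)) - real (a t)))"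
    by (rule sum_mono) (rule trm)
  also have "\<dots> = (H (real (a k)) - H (real (a 0))) + c/2 * (real (a k) - real (a 0))"
  proof -
    have t1: "(\<Sum>t<k. H (real (a (Suc t))) - H (real (a t))) = H (real (a k)) - H (real (a 0))"
      by (rule sum_lessThan_telescope)
    have t2: "(\<Sum>t<k. real (a (Suc t)) - real (a t)) = real (a k) - real (a 0)"
      by (rule sum_lessThan_telescope)
    have t3: "(\<Sum>t<k. c/2 * (real (a (Suc t)) - real (a t))) = c/2 * (real (a k) - real (a 0))"
      by (simp only: sum_distrib_left[symmetric] t2)
    show ?thesis by (simp only: sum.distrib t1 t3)
  qed
  also have "\<dots> = real n * real (a k) - (real (a k))^2/2 + (x/real k + 1) * real (a k) / 2"
    using a0 unfolding H_def c_def by simp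
  also have "\<dots> \<le> real n * x - x^2 * (real k - 1) / (2 * real k) + real n"
  proof (rule final_ineq)
    show "x \<le> real (a k)" using lo[of k] k by simp
    show "real (a k) \<le> x + 1" using hi[of k] k by simp
  qed (use akn k x in auto)
  finally show ?thesis .
qed

lemma card_filter_real:
  assumes "finite A"
  shows "real (card {x\<in>A. P x}) = (\<Sum>x\<in>A. if P x then 1 else 0)"
proof -
  have "real (card {x\<in>A. P x}) = (\<Sum>x\<in>{x\<in>A. P x}. 1)" by simp
  also have "\<dots> = (\<Sum>x\<in>A. if P x then 1 else 0)" by (rule sum.inter_filter[OF assms])
  finally show ?thesis .
qed

theorem proposition8:
  fixes n k r :: nat and p :: real
  assumes "n \<ge> 1" and "k \<ge> 1" and "0 \<le> p" and "p \<le> 1" and "r \<in> {1..n}"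
  shows "\<exists>(Q :: nat \<Rightarrow> history \<Rightarrow> (nat \<times> nat) set) (out :: history \<Rightarrow> nat).
           (\<forall>t h. finite (Q t h)) \<and>
           success_prob n r k Q out \<ge> p \<and>
           expected_queries n k Q \<le> real n * p * (1 - (real k - 1) / (2 * real k) * p) + 1"
proof -
  note n = assms(1) and k = assms(2) and r = assms(5)
  define x where "x = real n * p"
  have x0: "0 \<le> x" using assms unfolding x_def by simp
  have xn: "x \<le> real n" using assms unfolding x_def by (simp add: mult_left_le)
  define a where "a = (\<lambda>t. nat \<lceil>real t * x / real k\<rceil>)"
  have a0: "a 0 = 0" unfolding a_def by simp
  have nonneg: "0 \<le> real t * x / real k" for t using x0 by simp
  have lo: "real t * x / real k \<le> real (a t)" for t
    unfolding a_def using nonneg[of t] by (simp add: of_nat_nat)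
  have hi: "real (a t) \<le> real t * x / real k + 1" for t
    unfolding a_def using nonneg[of t] by (simp add: of_nat_nat of_int_ceiling_le_add_one)
  have mono: "mono a"
  proof (rule monoI)
    fix t t' :: nat assume "t \<le> t'"
    then have "real t * x / real k \<le> real t' * x / real k"
      using x0 by (intro divide_right_mono mult_right_mono) auto
    then show "a t \<le> a t'" unfolding a_def by (intro nat_mono ceiling_mono)
  qed
  have akx: "a k = nat \<lceil>x\<rceil>" unfolding a_def using k by simp
  have akn: "a k \<le> n" unfolding akx using xn by (simp add: ceiling_le_iff nat_le_iff)
  have ax: "x \<le> real (a k)" using lo[of k] k by simp
  define P where "P = perms n"
  define c where "c = card {\<sigma> \<in> perms n. \<sigma> 1 = r}"
  have finP: "finite P" unfolding P_def by (rule finite_perms)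
  have cardP: "real (card P) = real c * real n"
    using sum_perms[OF r, of "\<lambda>_. 1::real"] unfolding P_def c_def by simp
  have cardP2: "card P = fact n" unfolding P_def perms_def by (rule card_permutations) auto
  have cpos: "real c > 0"
  proof -
    have "real c * real n > 0" unfolding cardP[symmetric] cardP2 by simp
    then show ?thesis using n by (simp add: zero_less_mult_iff)
  qed
  let ?Q = "QQ a r" and ?out = "outp n r"
  have fin: "\<forall>t h. finite (?Q t h)" by (simp add: QQ_def)
  have "real (card {\<sigma> \<in> P. inv \<sigma> r \<le> a k}) = (\<Sum>\<sigma>\<in>P. (\<lambda>j. if j \<le> a k then 1 else 0) (inv \<sigma> r))"
    using finP by (simp only: card_filter_real)
  also have "\<dots> = real c * (\<Sum>j\<in>{1..n}. if j \<le> a k then 1 else 0)"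
    unfolding P_def c_def by (rule sum_perms[OF r])
  also have "(\<Sum>j\<in>{1..n}. if j \<le> a k then 1 else 0 :: real) = real (card {j\<in>{1..n}. j \<le> a k})"
    by (simp only: card_filter_real[OF finite_atLeastAtMost])
  also have "{j\<in>{1..n}. j \<le> a k} = {1..a k}" using akn by auto
  finally have cs: "real (card {\<sigma> \<in> P. inv \<sigma> r \<le> a k}) = real c * real (a k)" by simp
  have sub: "{\<sigma> \<in> P. inv \<sigma> r \<le> a k} \<subseteq> {\<sigma> \<in> perms n. succeeds n r k ?Q ?out \<sigma>}"
    using succ_QQ[OF mono a0 _ r] unfolding P_def by auto
  have "real c * real (a k) \<le> real (card {\<sigma> \<in> perms n. succeeds n r k ?Q ?out \<sigma>})"
    unfolding cs[symmetric] using card_mono[OF _ sub] finP unfolding P_def by simp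
  then have "real c * real (a k) / (real c * real n) \<le> real (card {\<sigma> \<in> perms n. succeeds n r k ?Q ?out \<sigma>}) / (real c * real n)"
    using cpos by (intro divide_right_mono) simp_all
  moreover have "real c * real (a k) / (real c * real n) = real (a k) / real n" using cpos by simp
  ultimately have "real (a k) / real n \<le> success_prob n r k ?Q ?out"
    unfolding success_prob_def P_def[symmetric] cardP by simp
  moreover have "p \<le> real (a k) / real n" using ax n unfolding x_def by (simp add: field_simps)
  ultimately have succ: "p \<le> success_prob n r k ?Q ?out" by linarith
  define g where "g = (\<lambda>j. \<Sum>t<k. if j \<le> a t then 0 else real (a (Suc t) - a t))"
  have "(\<Sum>\<sigma>\<in>P. real (num_queries ?Q k \<sigma>)) = (\<Sum>\<sigma>\<in>P. g (inv \<sigma> r))"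
  proof (rule sum.cong[OF refl])
    fix \<sigma> assume "\<sigma> \<in> P"
    then show "real (num_queries ?Q k \<sigma>) = g (inv \<sigma> r)"
      unfolding num_QQ[OF mono a0 \<open>\<sigma> \<in> P\<close>[unfolded P_def] r] g_def by (simp only: of_nat_sum of_nat_0 if_distrib[where f = real])
  qed
  also have "\<dots> = real c * (\<Sum>j\<in>{1..n}. g j)" unfolding P_def c_def by (rule sum_perms[OF r])
  finally have es: "(\<Sum>\<sigma>\<in>P. real (num_queries ?Q k \<sigma>)) = real c * (\<Sum>j\<in>{1..n}. g j)" .
  have "(\<Sum>j\<in>{1..n}. g j) = (\<Sum>t<k. \<Sum>j\<in>{1..n}. if j \<le> a t then 0 else real (a (Suc t) - a t))"
    unfolding g_def by (rule sum.swap)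
  also have "\<dots> = (\<Sum>t<k. real (a (Suc t) - a t) * (real n - real (a t)))"
  proof (rule sum.cong[OF refl])
    fix t assume "t \<in> {..<k}"
    then have "a t \<le> a k" using mono by (simp add: monoD)
    then have atn: "a t \<le> n" using akn by simp
    have "(\<Sum>j\<in>{1..n}. if j \<le> a t then 0 else real (a (Suc t) - a t))
        = (\<Sum>j\<in>{1..n}. if \<not> j \<le> a t then real (a (Suc t) - a t) else 0)"
      by (rule sum.cong) auto
    also have "\<dots> = (\<Sum>j\<in>{j\<in>{1..n}. \<not> j \<le> a t}. real (a (Suc t) - a t))"
      by (rule sum.inter_filter[symmetric]) simp
    also have "{j\<in>{1..n}. \<not> j \<le> a t} = {Suc (a t)..n}" by auto
    finally show "(\<Sum>j\<in>{1..n}. if j \<le> a t then 0 else real (a (Suc t) - a t))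
        = real (a (Suc t) - a t) * (real n - real (a t))"
      using atn by (simp add: of_nat_diff)
  qed
  also have "\<dots> \<le> real n * x - x^2 * (real k - 1) / (2 * real k) + real n"
    by (rule sum_ineq[OF mono a0 lo hi k x0 xn akn])
  finally have S: "(\<Sum>j\<in>{1..n}. g j) \<le> real n * x - x^2 * (real k - 1) / (2 * real k) + real n" .
  have "expected_queries n k ?Q = (\<Sum>j\<in>{1..n}. g j) / real n"
    unfolding expected_queries_def P_def[symmetric] es cardP using cpos by simp
  also have "\<dots> \<le> (real n * x - x^2 * (real k - 1) / (2 * real k) + real n) / real n"
    using S n by (simp add: divide_right_mono)
  also have "\<dots> = real n * p * (1 - (real k - 1) / (2 * real k) * p) + 1"
    unfolding x_def using n k by (simp add: field_simps power2_eq_square)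
  finally have eq: "expected_queries n k ?Q \<le> real n * p * (1 - (real k - 1) / (2 * real k) * p) + 1" .
  show ?thesis using fin succ eq by blast
qed

end
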